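(* Let $u$ be a positive harmonic function on $\mathbf D$ belonging to $\mathcal K$, and let $\mu$ be the finite positive Borel measure on $\mathbf T$ with $u(re^{i\theta})=\int P(re^{i(\theta-\phi)})\,d\mu(e^{i\phi})$, where $P(re^{i\theta})=\frac1{2\pi}\frac{1-r^2}{1-2r\cos\theta+r^2}$. Let $C$ be a constant such that $\mu(I)\le C|I|\log\frac e{|I|}$ for every arc $I\subset\mathbf T$. For $n\ge1$ let $F_n=\{\theta\in[0,2\pi):\ \limsup_{r\to1}\frac{u(re^{i\theta})}{|\log(1-r)|}\ge\frac2n\}$. Then there exists $k>0$ depending only on $C$ and $n$ such that for each $\theta\in F_n$ there exists a decreasing sequence $(\Delta_j)$ with $\Delta_j\to0$ satisfying $$\mu(\theta-\Delta_j,\theta+\Delta_j)\ge k\left(10\Delta_j\log\frac1{10\Delta_j}\right)\quad\text{for all }j.$$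
   Context: $\mathbf D$ is the open unit disc and $\mathbf T$ the unit circle; $|I|$ is arc length. $\mathcal K$ is the class of harmonic functions $u$ on $\mathbf D$ for which there is a constant $C'$ with $u(z)\le C'\log\frac{e}{1-|z|}$ on $\mathbf D$ (for positive $u\in\mathcal K$ the representing measure satisfies $\mu(I)\le C|I|\log\frac e{|I|}$ for some $C$). Notation: $\mu(\alpha,\beta)=\mu(\{e^{i\varphi}:\alpha\le\varphi<\beta\})$. *)

theory Defs
  imports "HOL-Analysis.Analysis"
begin

definition dx :: "(complex \<Rightarrow> real) \<Rightarrow> complex \<Rightarrow> real" where
  "dx u z = deriv (\<lambda>t::real. u (z + of_real t)) 0"

definition dy :: "(complex \<Rightarrow> real) \<Rightarrow> complex \<Rightarrow> real" where
  "dy u z = deriv (\<lambda>t::real. u (z + \<i> * of_real t)) 0"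

definition harmonic_on :: "complex set \<Rightarrow> (complex \<Rightarrow> real) \<Rightarrow> bool" where
  "harmonic_on S u \<longleftrightarrow> open S \<and>
     (\<forall>z\<in>S. u differentiable (at z)) \<and>
     (\<forall>z\<in>S. dx u differentiable (at z) \<and> dy u differentiable (at z)) \<and>
     continuous_on S (dx (dx u)) \<and> continuous_on S (dx (dy u)) \<and>
     continuous_on S (dy (dx u)) \<and> continuous_on S (dy (dy u)) \<and>
     (\<forall>z\<in>S. dx (dx u) z + dy (dy u) z = 0)"

definition poisson :: "real \<Rightarrow> real \<Rightarrow> real" where
  "poisson r t = (1 / (2 * pi)) * ((1 - r\<^sup>2) / (1 - 2 * r * cos t + r\<^sup>2))"

definition classK :: "(complex \<Rightarrow> real) \<Rightarrow> bool" where
  "classK u \<longleftrightarrow> (\<exists>C'. \<forall>z\<in>ball 0 1. u z \<le> C' * ln (exp 1 / (1 - cmod z)))"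

text \<open>mu(alpha, beta) = mu({e^{i phi} : alpha <= phi < beta}).\<close>
definition arc :: "real \<Rightarrow> real \<Rightarrow> complex set" where
  "arc \<alpha> \<beta> = {cis \<phi> | \<phi>. \<alpha> \<le> \<phi> \<and> \<phi> < \<beta>}"

definition Fset :: "(complex \<Rightarrow> real) \<Rightarrow> nat \<Rightarrow> real set" where
  "Fset u n = {\<theta>. 0 \<le> \<theta> \<and> \<theta> < 2 * pi \<and>
     Limsup (at_left 1) (\<lambda>r. ereal (u (of_real r * cis \<theta>) / \<bar>ln (1 - r)\<bar>)) \<ge> ereal (2 / real n)}"

end

theory Submission
  imports Defs
begin

lemma cos_lower: fixes x :: real assumes "\<bar>x\<bar> \<le> 1" shows "x\<^sup>2 / 3 \<le> 1 - cos x"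
proof -
  obtain t where t: "cos x = (\<Sum>m<4. cos_coeff m * x ^ m) + (cos(t + 1/2 * real 4 * pi) / fact 4) * x ^ 4"
    using Maclaurin_cos_expansion by blast
  have s: "(\<Sum>m<4. cos_coeff m * x ^ m) = 1 - x\<^sup>2/2"
    by (auto simp add: numeral_eq_Suc cos_coeff_def power2_eq_square; presburger)
  have "cos(t + 1/2 * real 4 * pi) / fact 4 * x ^ 4 \<le> x^4/24"
    using mult_right_mono[OF cos_le_one[of "t + 1/2 * real 4 * pi"] zero_le_even_power[of 4 x]]
    by (simp add: fact_numeral divide_right_mono)
  moreover have "x^4 \<le> x\<^sup>2"
  proof -
    have "x\<^sup>2 \<le> 1" using assms by (simp add: abs_square_le_1)
    then have "x\<^sup>2 * x\<^sup>2 \<le> 1 * x\<^sup>2" by (intro mult_right_mono) auto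
    then show ?thesis by (simp add: power2_eq_square power4_eq_xxxx)
  qed
  ultimately show ?thesis using t s zero_le_power2[of x] by linarith
qed

lemma poisson_nonneg: "0 \<le> r \<Longrightarrow> r < 1 \<Longrightarrow> 0 \<le> poisson r t"
proof -
  assume r: "0 \<le> r" "r < 1"
  have d: "1 - 2 * r * cos t + r\<^sup>2 = (1-r)\<^sup>2 + 2*r*(1 - cos t)" by (simp add: power2_eq_square algebra_simps)
  have "0 \<le> (1-r)\<^sup>2 + 2*r*(1 - cos t)" using r by (intro add_nonneg_nonneg) auto
  moreover have "0 \<le> 1 - r\<^sup>2" using r by (simp add: power2_eq_square mult_le_one)
  ultimately show ?thesis unfolding poisson_def d by simp
qed

lemma poisson_le_global: assumes "1/2 \<le> r" "r < 1" shows "poisson r t \<le> 1 / (pi * (1 - r))"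
proof -
  have d: "1 - 2 * r * cos t + r\<^sup>2 = (1-r)\<^sup>2 + 2*r*(1 - cos t)" by (simp add: power2_eq_square algebra_simps)
  have den: "(1-r)\<^sup>2 \<le> (1-r)\<^sup>2 + 2*r*(1 - cos t)" using assms by simp
  have pos: "0 < (1-r)\<^sup>2" using assms by simp
  have num: "1 - r\<^sup>2 \<le> 2 * (1 - r)" using assms zero_le_power2[of "1-r"] by (simp add: power2_eq_square algebra_simps)
  have "(1 - r\<^sup>2) / ((1-r)\<^sup>2 + 2*r*(1 - cos t)) \<le> (2 * (1 - r)) / (1-r)\<^sup>2"
    using den pos num assms by (intro frac_le) (auto simp: power2_eq_square mult_le_one)
  also have "\<dots> = 2 / (1 - r)"
  proof -
    have h: "1 - r \<noteq> 0" using assms by simp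
    show ?thesis unfolding power2_eq_square using h by (simp add: divide_simps)
  qed
  finally have "(1 - r\<^sup>2) / ((1-r)\<^sup>2 + 2*r*(1 - cos t)) \<le> 2 / (1 - r)" .
  then have "poisson r t \<le> (1/(2*pi)) * (2 / (1 - r))" unfolding poisson_def d
    by (intro mult_left_mono) auto
  then show ?thesis by simp
qed

lemma poisson_le_far: assumes "1/2 \<le> r" "r < 1" "0 < d" "d \<le> 1 - cos t"
  shows "poisson r t \<le> (1 - r) / (pi * d)"
proof -
  have d: "1 - 2 * r * cos t + r\<^sup>2 = (1-r)\<^sup>2 + 2*r*(1 - cos t)" by (simp add: power2_eq_square algebra_simps)
  have "d \<le> 2*r*(1 - cos t)" using assms
    using mult_mono[of 1 "2*r" d "1 - cos t"] by simp
  then have den: "d \<le> (1-r)\<^sup>2 + 2*r*(1 - cos t)" using zero_le_power2[of "1-r"] by linarith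
  have num: "1 - r\<^sup>2 \<le> 2 * (1 - r)" using assms zero_le_power2[of "1-r"] by (simp add: power2_eq_square algebra_simps)
  have "(1 - r\<^sup>2) / ((1-r)\<^sup>2 + 2*r*(1 - cos t)) \<le> (2 * (1 - r)) / d"
    using den num assms by (intro frac_le) (auto simp: power2_eq_square mult_le_one)
  then have "poisson r t \<le> (1/(2*pi)) * ((2 * (1 - r)) / d)" unfolding poisson_def d
    by (intro mult_left_mono) auto
  then show ?thesis using assms by (simp add: field_simps)
qed

lemma in_arc: assumes "cmod z = 1" "0 < \<delta>" "\<delta> < pi" "cos (\<theta> - Arg z) > cos \<delta>"
  shows "z \<in> arc (\<theta> - \<delta>) (\<theta> + \<delta>)"
proof -
  define t where "t = \<theta> - Arg z"
  define m where "m = \<lfloor>(t + pi) / (2*pi)\<rfloor>"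
  define s where "s = t - 2*pi*m"
  have "m \<le> (t + pi) / (2*pi)" "(t + pi) / (2*pi) < m + 1" unfolding m_def by linarith+
  then have sb: "-pi \<le> s" "s < pi" unfolding s_def by (auto simp: field_simps)
  have "cos s = cos t" unfolding s_def cos_diff using cos_int_2pin[of m] sin_int_2pin[of m] by simp
  then have "cos \<bar>s\<bar> > cos \<delta>" using assms t_def by simp
  then have "\<bar>s\<bar> < \<delta>" using cos_mono_less_eq[of \<delta> "\<bar>s\<bar>"] sb assms by auto
  moreover have "cis (\<theta> - s) = z"
  proof -
    have "\<theta> - s = Arg z + 2*pi*m" unfolding s_def t_def by simp
    then have "cis (\<theta> - s) = cis (Arg z) * cis (2*pi*m)" by (simp add: cis_mult del: cis_multiple_2pi)
    also have "\<dots> = sgn z" using assms by (subst cis_Arg) auto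
    also have "\<dots> = z" using assms by (simp add: sgn_div_norm)
    finally show ?thesis .
  qed
  ultimately show ?thesis unfolding arc_def by (intro CollectI exI[of _ "\<theta> - s"]) auto
qed

lemma arc_borel: "arc \<alpha> \<beta> \<in> sets borel"
proof -
  have eq: "arc \<alpha> \<beta> = (\<Union>n::nat. cis ` {\<alpha>..\<beta> - 1/Suc n})"
  proof
    show "arc \<alpha> \<beta> \<subseteq> (\<Union>n::nat. cis ` {\<alpha>..\<beta> - 1/Suc n})"
    proof
      fix z assume "z \<in> arc \<alpha> \<beta>"
      then obtain \<phi> where p: "z = cis \<phi>" "\<alpha> \<le> \<phi>" "\<phi> < \<beta>" unfolding arc_def by auto
      obtain n :: nat where "1 / (\<beta> - \<phi>) < n" using reals_Archimedean2 by blast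
      then have "1 < real n * (\<beta> - \<phi>)" using p by (simp add: divide_less_eq mult.commute)
      then have "1 \<le> real (Suc n) * (\<beta> - \<phi>)" using p by (simp add: algebra_simps)
      then have "1 / Suc n \<le> \<beta> - \<phi>" by (simp add: divide_le_eq mult.commute)
      then have "z \<in> cis ` {\<alpha>..\<beta> - 1/Suc n}" using p by (intro image_eqI[of z cis \<phi>]) auto
      then show "z \<in> (\<Union>n::nat. cis ` {\<alpha>..\<beta> - 1/Suc n})" by blast
    qed
  next
    show "(\<Union>n::nat. cis ` {\<alpha>..\<beta> - 1/Suc n}) \<subseteq> arc \<alpha> \<beta>"
    proof
      fix z assume "z \<in> (\<Union>n::nat. cis ` {\<alpha>..\<beta> - 1/Suc n})"
      then obtain n \<phi> where p: "z = cis \<phi>" "\<alpha> \<le> \<phi>" "\<phi> \<le> \<beta> - 1/Suc n" by auto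
      have "0 < 1 / real (Suc n)" by simp
      then have "\<phi> < \<beta>" using p by linarith
      then show "z \<in> arc \<alpha> \<beta>" using p unfolding arc_def by auto
    qed
  qed
  have "\<And>n::nat. cis ` {\<alpha>..\<beta> - 1/Suc n} \<in> sets borel"
    by (intro borel_closed compact_imp_closed compact_continuous_image continuous_intros) auto
  then show ?thesis unfolding eq by auto
qed

lemma arc_sphere: "arc \<alpha> \<beta> \<subseteq> sphere 0 1"
  unfolding arc_def by auto

lemma far_arc: assumes "cmod z = 1" "0 < \<delta>" "\<delta> \<le> 1" "1/2 \<le> r" "r < 1"
  "z \<notin> arc (\<theta> - \<delta>) (\<theta> + \<delta>)"
  shows "poisson r (\<theta> - Arg z) \<le> 3 * (1 - r) / (pi * \<delta>\<^sup>2)"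
proof -
  have "\<delta> < pi" using assms pi_gt3 by linarith
  then have c: "cos (\<theta> - Arg z) \<le> cos \<delta>" using in_arc[of z \<delta> \<theta>] assms by force
  have "\<delta>\<^sup>2 / 3 \<le> 1 - cos \<delta>" using cos_lower[of \<delta>] assms by simp
  then have "\<delta>\<^sup>2 / 3 \<le> 1 - cos (\<theta> - Arg z)" using c by linarith
  then have "poisson r (\<theta> - Arg z) \<le> (1 - r) / (pi * (\<delta>\<^sup>2 / 3))"
    using assms by (intro poisson_le_far) auto
  then show ?thesis by (simp add: field_simps)
qed

lemma pointwise:
  assumes "cmod z = 1" "1/2 \<le> r" "r < 1" "2^J * (1 - r) \<le> 1"
  shows "poisson r (\<theta> - Arg z) \<le>
    (\<Sum>j\<le>J. 12 / (pi * (1 - r) * 4^j) * indicator (arc (\<theta> - 2^j*(1-r)) (\<theta> + 2^j*(1-r))) z)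
    + 3 / (pi * (1 - r) * 4^J)"
  using assms(4)
proof (induction J)
  case 0
  let ?h = "1 - r"
  have hp: "0 < ?h" using assms by simp
  show ?case
  proof (cases "z \<in> arc (\<theta> - ?h) (\<theta> + ?h)")
    case True
    have "poisson r (\<theta> - Arg z) \<le> 1 / (pi * ?h)" using assms poisson_le_global by blast
    also have "\<dots> \<le> 12 / (pi * ?h)" using hp by (simp add: divide_right_mono)
    finally have "poisson r (\<theta> - Arg z) \<le> 12 / (pi * ?h)" .
    moreover have "12 / (pi * ?h) \<le> 15 / (pi * ?h)" using hp by (simp add: divide_right_mono)
    ultimately show ?thesis using True hp by simp
  next
    case False
    have "poisson r (\<theta> - Arg z) \<le> 3 * ?h / (pi * ?h\<^sup>2)" using far_arc[of z ?h r \<theta>] assms 0 False hp by simp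
    also have "\<dots> = 3 / (pi * ?h)" using hp unfolding power2_eq_square by (simp add: divide_simps)
    finally show ?thesis using False hp by simp
  qed
next
  case (Suc J)
  let ?h = "1 - r"
  have hp: "0 < ?h" using assms by simp
  let ?S = "\<lambda>J. (\<Sum>j\<le>J. 12 / (pi * (1 - r) * 4^j) * indicator (arc (\<theta> - 2^j*(1-r)) (\<theta> + 2^j*(1-r))) z)"
  have "2^J * ?h \<le> 2^Suc J * ?h" using hp by simp
  then have IH: "poisson r (\<theta> - Arg z) \<le> ?S J + 3 / (pi * ?h * 4^J)" using Suc by linarith
  have Snn: "0 \<le> ?S J" using hp by (intro sum_nonneg) auto
  have eqa: "3 / (pi * ?h * 4^J) = 12 / (pi * ?h * 4^Suc J)" by simp
  show ?case
  proof (cases "z \<in> arc (\<theta> - 2^Suc J * ?h) (\<theta> + 2^Suc J * ?h)")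
    case True
    have "?S (Suc J) = ?S J + 12 / (pi * ?h * 4^Suc J)" using True by simp
    moreover have "0 \<le> 3 / (pi * ?h * 4^Suc J)" using hp by simp
    ultimately show ?thesis using IH eqa by linarith
  next
    case False
    have "poisson r (\<theta> - Arg z) \<le> 3 * ?h / (pi * (2^Suc J * ?h)\<^sup>2)"
      using far_arc[of z "2^Suc J * ?h" r \<theta>] assms Suc.prems False hp by simp
    also have "\<dots> = 3 / (pi * ?h * 4^Suc J)" using hp
    proof -
      have "(2^Suc J * ?h)\<^sup>2 = (2 * 2) ^ Suc J * ?h\<^sup>2"
        by (simp only: power2_eq_square power_mult_distrib) (simp add: algebra_simps)
      then have "3 * ?h / (pi * (2^Suc J * ?h)\<^sup>2) = 3 * ?h / (pi * (4 ^ Suc J * (?h * ?h)))"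
        by (simp add: power2_eq_square)
      also have "\<dots> = 3 / (pi * ?h * 4^Suc J)" using hp
        by (simp add: divide_simps del: power_Suc)
      finally show ?thesis .
    qed
    finally have "poisson r (\<theta> - Arg z) \<le> 3 / (pi * ?h * 4^Suc J)" .
    moreover have "0 \<le> ?S (Suc J)" using hp by (intro sum_nonneg) auto
    ultimately show ?thesis by linarith
  qed
qed

lemma exists_J: fixes h D :: real assumes "0 < h" "h \<le> D" shows "\<exists>J::nat. 2^J * h \<le> D \<and> D < 2^Suc J * h"
proof -
  obtain N :: nat where N: "D / h < 2^N" using real_arch_pow[of 2 "D/h"] by auto
  then have ex: "\<exists>N::nat. D < 2^N * h" using assms by (auto simp: field_simps)
  define L where "L = (LEAST N::nat. D < 2^N * h)"
  have L1: "D < 2^L * h" unfolding L_def by (rule LeastI_ex[OF ex])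
  have "L \<noteq> 0"
  proof
    assume "L = 0" then show False using L1 assms by simp
  qed
  then obtain J where LJ: "L = Suc J" using not0_implies_Suc by blast
  have "\<not> D < 2^J * h" using not_less_Least[of J "\<lambda>N. D < 2^N * h"] LJ unfolding L_def by auto
  then show ?thesis using L1 LJ by (intro exI[of _ J]) auto
qed

lemma geom_half: "(\<Sum>j\<le>J. (1/2::real)^j) = 2 - (1/2)^J"
  by (induction J) auto

lemma upper_bound:
  fixes M :: "complex measure"
  assumes sM: "sets M = sets (restrict_space borel (sphere 0 1))" and fM: "finite_measure M"
    and int: "integrable M (\<lambda>\<zeta>. poisson r (\<theta> - Arg \<zeta>))"
    and r: "1/2 \<le> r" "r < 1" and D: "0 < D" "D \<le> 1/10" "1 - r \<le> D" and k: "0 \<le> k"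
    and bnd: "\<forall>\<delta>. 0 < \<delta> \<and> \<delta> \<le> D \<longrightarrow> measure M (arc (\<theta> - \<delta>) (\<theta> + \<delta>)) \<le> k * (10 * \<delta> * ln (1 / (10 * \<delta>)))"
  shows "(\<integral>\<zeta>. poisson r (\<theta> - Arg \<zeta>) \<partial>M) \<le> 80 * k * ln (1 / (1 - r)) + 4 * (1 - r) * measure M (space M) / D\<^sup>2"
proof -
  define h where "h = 1 - r"
  have hp: "0 < h" "h \<le> D" using r D unfolding h_def by auto
  obtain J where J: "2^J * h \<le> D" "D < 2^Suc J * h" using exists_J[OF hp] by blast
  define L where "L = ln (1 / h)"
  have L0: "0 \<le> L" unfolding L_def using hp D by simp
  define A where "A j = arc (\<theta> - 2^j*h) (\<theta> + 2^j*h)" for j :: nat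
  define a where "a j = 12 / (pi * h * 4^j)" for j :: nat
  define b where "b = 3 / (pi * h * 4^J)"
  have spM: "space M = sphere 0 1" using sets_eq_imp_space_eq[OF sM] by (simp add: space_restrict_space)
  have Asets: "A j \<in> sets M" for j
    unfolding sM A_def using arc_borel arc_sphere
    by (subst sets_restrict_space_iff) auto
  have Aspace: "A j \<inter> space M = A j" for j unfolding spM A_def using arc_sphere by auto
  have fin: "emeasure M (A j) < \<infinity>" for j using finite_measure.emeasure_finite[OF fM] by (simp add: less_top)
  define g where "g \<zeta> = (\<Sum>j\<le>J. a j * indicator (A j) \<zeta>) + b" for \<zeta> :: complex
  have intg: "integrable M g" unfolding g_def
    apply (rule Bochner_Integration.integrable_add)
     apply (rule Bochner_Integration.integrable_sum)
     apply (rule integrable_mult_right)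
     apply (rule integrable_real_indicator[OF Asets fin])
    apply (rule finite_measure.integrable_const[OF fM])
    done
  have "(\<integral>\<zeta>. poisson r (\<theta> - Arg \<zeta>) \<partial>M) \<le> integral\<^sup>L M g"
  proof (rule integral_mono[OF int intg])
    fix z assume "z \<in> space M"
    then have "cmod z = 1" using spM by simp
    moreover have "2^J * (1 - r) \<le> 1" using J D unfolding h_def by simp
    ultimately show "poisson r (\<theta> - Arg z) \<le> g z"
      using pointwise[of z r J \<theta>] r unfolding g_def a_def b_def A_def h_def by simp
  qed
  also have "integral\<^sup>L M g = (\<Sum>j\<le>J. a j * measure M (A j)) + b * measure M (space M)"
  proof -
    have i1: "integrable M (\<lambda>\<zeta>. \<Sum>j\<le>J. a j * indicator (A j) \<zeta>)"
      apply (rule Bochner_Integration.integrable_sum)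
      apply (rule integrable_mult_right)
      apply (rule integrable_real_indicator[OF Asets fin])
      done
    have "integral\<^sup>L M g = (\<integral>\<zeta>. (\<Sum>j\<le>J. a j * indicator (A j) \<zeta>) \<partial>M) + (\<integral>\<zeta>. b \<partial>M)"
      unfolding g_def by (rule Bochner_Integration.integral_add[OF i1 finite_measure.integrable_const[OF fM]])
    also have "(\<integral>\<zeta>. (\<Sum>j\<le>J. a j * indicator (A j) \<zeta>) \<partial>M) = (\<Sum>j\<le>J. (\<integral>\<zeta>. a j * indicator (A j) \<zeta> \<partial>M))"
      apply (rule Bochner_Integration.integral_sum)
      apply (rule integrable_mult_right)
      apply (rule integrable_real_indicator[OF Asets fin])
      done
    also have "\<dots> = (\<Sum>j\<le>J. a j * measure M (A j))"
      by (intro sum.cong refl) (simp add: Aspace)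
    finally show ?thesis by simp
  qed
  also have "\<dots> \<le> 80 * k * L + 4 * h * measure M (space M) / D\<^sup>2"
  proof -
    have tm: "a j * measure M (A j) \<le> 40 * k * L * (1/2)^j" if "j \<le> J" for j
    proof -
      define d where "d = 2^j * h"
      have dp: "0 < d" "d \<le> D" "h \<le> d"
        using hp J that unfolding d_def by (auto intro: order.trans[OF mult_right_mono[of "2^j" "2^J"]])
      have "measure M (A j) \<le> k * (10 * d * ln (1 / (10 * d)))" using bnd dp unfolding A_def d_def by auto
      also have "\<dots> \<le> k * (10 * d * L)"
      proof -
        have "ln (1 / (10 * d)) \<le> L" unfolding L_def using dp hp by (subst ln_le_cancel_iff) (auto simp: field_simps)
        then show ?thesis using k dp by (intro mult_left_mono) auto
      qed
      finally have m: "measure M (A j) \<le> k * (10 * d * L)" .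
      have "a j * measure M (A j) \<le> a j * (k * (10 * d * L))"
        using m unfolding a_def using hp by (intro mult_left_mono) auto
      also have "\<dots> = 120 * k * L / pi * (1/2)^j"
        unfolding a_def d_def using hp
        by (simp add: field_simps power_mult_distrib flip: power_mult_distrib)
      also have "\<dots> \<le> 40 * k * L * (1/2)^j"
      proof -
        have "3 * (L * k) \<le> pi * (L * k)" using pi_gt3 k L0 by (intro mult_right_mono) auto
        then have "120 * k * L / pi \<le> 40 * k * L" using pi_gt3 k L0
          by (simp add: divide_simps algebra_simps)
        then show ?thesis by (intro mult_right_mono) auto
      qed
      finally show ?thesis .
    qed
    have "(\<Sum>j\<le>J. a j * measure M (A j)) \<le> (\<Sum>j\<le>J. 40 * k * L * (1/2)^j)"
      using tm by (intro sum_mono) auto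
    also have "\<dots> = 40 * k * L * (2 - (1/2)^J)" by (simp add: sum_distrib_left[symmetric] geom_half)
    also have "\<dots> \<le> 40 * k * L * 2" using k L0 by (intro mult_left_mono) auto
    also have "\<dots> = 80 * k * L" by simp
    finally have s1: "(\<Sum>j\<le>J. a j * measure M (A j)) \<le> 80 * k * L" .
    have "b \<le> 4 * h / D\<^sup>2"
    proof -
      have "D\<^sup>2 < (2^Suc J * h)\<^sup>2" using J D by (intro power_strict_mono) auto
      also have "\<dots> = 4 * 4^J * h\<^sup>2" by (simp add: power_mult_distrib power2_eq_square algebra_simps flip: power_mult_distrib)
      finally have Dl: "D\<^sup>2 < 4 * 4^J * h\<^sup>2" .
      have "b \<le> 1 / (h * 4^J)" unfolding b_def using pi_gt3 hp by (simp add: divide_simps)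
      also have "\<dots> \<le> 4 * h / D\<^sup>2" using Dl hp D by (simp add: divide_simps power2_eq_square algebra_simps)
      finally show ?thesis .
    qed
    then have "b * measure M (space M) \<le> 4 * h / D\<^sup>2 * measure M (space M)"
      by (intro mult_right_mono) auto
    then show ?thesis using s1 by simp
  qed
  finally show ?thesis unfolding L_def h_def .
qed

lemma eventual_bound:
  fixes M :: "complex measure" and u :: "complex \<Rightarrow> real"
  assumes n: "n \<ge> 1" and k: "k = 1 / (100 * real n)"
    and upos: "\<forall>z\<in>ball 0 1. u z > 0"
    and sM: "sets M = sets (restrict_space borel (sphere 0 1))" and fM: "finite_measure M"
    and rep: "\<forall>r \<theta>. 0 \<le> r \<and> r < 1 \<longrightarrow> u (of_real r * cis \<theta>) = (\<integral>\<zeta>. poisson r (\<theta> - Arg \<zeta>) \<partial>M)"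
    and D: "0 < D" "D \<le> 1/10"
    and bnd: "\<forall>\<delta>. 0 < \<delta> \<and> \<delta> \<le> D \<longrightarrow> measure M (arc (\<theta> - \<delta>) (\<theta> + \<delta>)) \<le> k * (10 * \<delta> * ln (1 / (10 * \<delta>)))"
  shows "\<forall>\<^sub>F r in at_left 1. u (of_real r * cis \<theta>) / \<bar>ln (1 - r)\<bar> \<le> 1 / real n"
proof -
  define T where "T = measure M (space M)"
  have T0: "0 \<le> T" unfolding T_def by simp
  define \<eta> where "\<eta> = min D (min (exp (-1)) (D\<^sup>2 / (20 * real n * (T + 1))))"
  have \<eta>p: "0 < \<eta>" unfolding \<eta>_def using D n T0 by auto
  have ev: "\<forall>\<^sub>F r in at_left 1. r \<in> {1 - \<eta><..<1}"
    using eventually_at_left_real[of "1 - \<eta>" 1] \<eta>p by simp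
  show ?thesis
  proof (rule eventually_mono[OF ev])
    fix r assume "r \<in> {1 - \<eta><..<1}"
    then have rr: "1 - \<eta> < r" "r < 1" by auto
    define h where "h = 1 - r"
    have hp: "0 < h" "h < \<eta>" using rr unfolding h_def by auto
    have hD: "h \<le> D" "h \<le> exp (-1)" "h \<le> D\<^sup>2 / (20 * real n * (T + 1))"
      using hp unfolding \<eta>_def by auto
    have r2: "1/2 \<le> r" using hD D unfolding h_def by simp
    have inball: "of_real r * cis \<theta> \<in> ball 0 1" using r2 rr by (simp add: norm_mult)
    have upr: "u (of_real r * cis \<theta>) = (\<integral>\<zeta>. poisson r (\<theta> - Arg \<zeta>) \<partial>M)" using rep r2 rr by simp
    have int: "integrable M (\<lambda>\<zeta>. poisson r (\<theta> - Arg \<zeta>))"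
    proof (rule ccontr)
      assume "\<not> ?thesis"
      then have "u (of_real r * cis \<theta>) = 0" using upr not_integrable_integral_eq by simp
      then show False using upos inball by fastforce
    qed
    have kp: "0 \<le> k" using k by simp
    have ub: "u (of_real r * cis \<theta>) \<le> 80 * k * ln (1 / h) + 4 * h * T / D\<^sup>2"
      using upper_bound[OF sM fM int r2 rr(2) D _ kp bnd] hD upr unfolding h_def T_def by simp
    define L where "L = ln (1 / h)"
    have L1: "1 \<le> L"
    proof -
      have "ln h \<le> ln (exp (-1))" using hD hp by (subst ln_le_cancel_iff) auto
      then have "ln h \<le> -1" by simp
      then show ?thesis unfolding L_def using hp by (simp add: ln_div)
    qed
    have "ln (1 - r) < 0" using hp rr r2 unfolding h_def by simp
    then have absL: "\<bar>ln (1 - r)\<bar> = L" unfolding L_def h_def using hp rr by (simp add: ln_div h_def)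
    have t1: "80 * k * L = 0.8 * L / real n" using k n by simp
    have t2: "4 * h * T / D\<^sup>2 \<le> 0.2 / real n"
    proof -
      have "4 * h * T / D\<^sup>2 \<le> 4 * (D\<^sup>2 / (20 * real n * (T + 1))) * T / D\<^sup>2"
      proof (rule divide_right_mono)
        show "4 * h * T \<le> 4 * (D\<^sup>2 / (20 * real n * (T + 1))) * T"
          using mult_right_mono[of "4*h" "4 * (D\<^sup>2 / (20 * real n * (T + 1)))" T] hD T0 by linarith
      qed simp
      also have "\<dots> = 0.2 / real n * (T / (T + 1))"
      proof -
        have "real n > 0" "T + 1 > 0" "D\<^sup>2 > 0" using n T0 D by auto
        then show ?thesis by (simp add: divide_simps)
      qed
      also have "\<dots> \<le> 0.2 / real n * 1" using T0 n by (intro mult_left_mono) auto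
      finally show ?thesis by simp
    qed
    have "0.2 / real n \<le> 0.2 * L / real n" using L1 n by (simp add: divide_right_mono)
    then have "u (of_real r * cis \<theta>) \<le> L / real n" using ub t1 t2 unfolding L_def by simp
    then show "u (of_real r * cis \<theta>) / \<bar>ln (1 - r)\<bar> \<le> 1 / real n"
      using absL L1 by (simp add: divide_simps)
  qed
qed

theorem lemma12:
  fixes C :: real and n :: nat
  assumes "n \<ge> 1"
  shows "\<exists>k>0. \<forall>(u :: complex \<Rightarrow> real) (M :: complex measure).
    harmonic_on (ball 0 1) u \<and> (\<forall>z\<in>ball 0 1. u z > 0) \<and> classK u \<and>
    sets M = sets (restrict_space borel (sphere 0 1)) \<and> finite_measure M \<and>
    (\<forall>r \<theta>. 0 \<le> r \<and> r < 1 \<longrightarrow>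
        u (of_real r * cis \<theta>) = (\<integral>\<zeta>. poisson r (\<theta> - Arg \<zeta>) \<partial>M)) \<and>
    (\<forall>\<alpha> \<beta>. 0 < \<beta> - \<alpha> \<and> \<beta> - \<alpha> \<le> 1 \<longrightarrow>
        measure M (arc \<alpha> \<beta>) \<le> C * (\<beta> - \<alpha>) * ln (exp 1 / (\<beta> - \<alpha>)))
    \<longrightarrow> (\<forall>\<theta>\<in>Fset u n. \<exists>\<Delta> :: nat \<Rightarrow> real.
          decseq \<Delta> \<and> (\<forall>j. \<Delta> j > 0) \<and> \<Delta> \<longlonglongrightarrow> 0 \<and>
          (\<forall>j. measure M (arc (\<theta> - \<Delta> j) (\<theta> + \<Delta> j))
                 \<ge> k * (10 * \<Delta> j * ln (1 / (10 * \<Delta> j)))))"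
proof -
  define k where "k = 1 / (100 * real n)"
  have kp: "k > 0" using assms unfolding k_def by simp
  show ?thesis
  proof (intro exI[of _ k] conjI kp allI impI ballI)
    fix u :: "complex \<Rightarrow> real" and M :: "complex measure" and \<theta> :: real
    assume H: "harmonic_on (ball 0 1) u \<and> (\<forall>z\<in>ball 0 1. u z > 0) \<and> classK u \<and>
    sets M = sets (restrict_space borel (sphere 0 1)) \<and> finite_measure M \<and>
    (\<forall>r \<theta>. 0 \<le> r \<and> r < 1 \<longrightarrow>
        u (of_real r * cis \<theta>) = (\<integral>\<zeta>. poisson r (\<theta> - Arg \<zeta>) \<partial>M)) \<and>
    (\<forall>\<alpha> \<beta>. 0 < \<beta> - \<alpha> \<and> \<beta> - \<alpha> \<le> 1 \<longrightarrow>
        measure M (arc \<alpha> \<beta>) \<le> C * (\<beta> - \<alpha>) * ln (exp 1 / (\<beta> - \<alpha>)))"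
    and \<theta>F: "\<theta> \<in> Fset u n"
    have upos: "\<forall>z\<in>ball 0 1. u z > 0" and sM: "sets M = sets (restrict_space borel (sphere 0 1))"
      and fM: "finite_measure M"
      and rep: "\<forall>r \<theta>. 0 \<le> r \<and> r < 1 \<longrightarrow> u (of_real r * cis \<theta>) = (\<integral>\<zeta>. poisson r (\<theta> - Arg \<zeta>) \<partial>M)"
      using H by auto
    define S where "S = {\<delta>. 0 < \<delta> \<and> k * (10 * \<delta> * ln (1 / (10 * \<delta>))) \<le> measure M (arc (\<theta> - \<delta>) (\<theta> + \<delta>))}"
    show "\<exists>\<Delta> :: nat \<Rightarrow> real.
          decseq \<Delta> \<and> (\<forall>j. \<Delta> j > 0) \<and> \<Delta> \<longlonglongrightarrow> 0 \<and>
          (\<forall>j. measure M (arc (\<theta> - \<Delta> j) (\<theta> + \<Delta> j))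
                 \<ge> k * (10 * \<Delta> j * ln (1 / (10 * \<Delta> j))))"
    proof (cases "\<forall>\<epsilon>>0. \<exists>\<delta>. \<delta> \<in> S \<and> \<delta> \<le> \<epsilon>")
      case True
      define \<Delta> where "\<Delta> = rec_nat (SOME \<delta>. \<delta> \<in> S \<and> \<delta> \<le> 1)
          (\<lambda>j d. SOME \<delta>. \<delta> \<in> S \<and> \<delta> \<le> min d (inverse (real (Suc (Suc j)))))"
      have \<Delta>0: "\<Delta> 0 = (SOME \<delta>. \<delta> \<in> S \<and> \<delta> \<le> 1)" unfolding \<Delta>_def by simp
      have \<Delta>S: "\<Delta> (Suc j) = (SOME \<delta>. \<delta> \<in> S \<and> \<delta> \<le> min (\<Delta> j) (inverse (real (Suc (Suc j)))))" for j
        unfolding \<Delta>_def by simp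
      have Q: "\<Delta> j \<in> S \<and> \<Delta> j \<le> inverse (real (Suc j))" for j
      proof (induction j)
        case 0
        have "\<exists>\<delta>. \<delta> \<in> S \<and> \<delta> \<le> 1" using True by auto
        from someI_ex[OF this] show ?case using \<Delta>0 by simp
      next
        case (Suc j)
        then have "0 < \<Delta> j" unfolding S_def by auto
        then have "0 < min (\<Delta> j) (inverse (real (Suc (Suc j))))" by simp
        then have "\<exists>\<delta>. \<delta> \<in> S \<and> \<delta> \<le> min (\<Delta> j) (inverse (real (Suc (Suc j))))" using True by blast
        from someI_ex[OF this] show ?case using \<Delta>S[of j] by simp
      qed
      have step: "\<Delta> (Suc j) \<le> \<Delta> j" for j
      proof -
        have "0 < \<Delta> j" using Q[of j] unfolding S_def by auto
        then have "0 < min (\<Delta> j) (inverse (real (Suc (Suc j))))" by simp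
        then have "\<exists>\<delta>. \<delta> \<in> S \<and> \<delta> \<le> min (\<Delta> j) (inverse (real (Suc (Suc j))))" using True by blast
        from someI_ex[OF this] show ?thesis using \<Delta>S[of j] by simp
      qed
      have pos: "\<forall>j. \<Delta> j > 0" using Q unfolding S_def by auto
      have lim: "\<Delta> \<longlonglongrightarrow> 0"
      proof (rule tendsto_sandwich[of "\<lambda>_. 0" _ _ "\<lambda>j. inverse (real (Suc j))"])
        show "\<forall>\<^sub>F j in sequentially. 0 \<le> \<Delta> j" using pos by (simp add: less_imp_le)
        show "\<forall>\<^sub>F j in sequentially. \<Delta> j \<le> inverse (real (Suc j))" using Q by simp
        show "(\<lambda>j. inverse (real (Suc j))) \<longlonglongrightarrow> 0" by (rule LIMSEQ_inverse_real_of_nat)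
      qed simp
      show ?thesis
        using pos lim Q step by (intro exI[of _ \<Delta>] conjI decseq_SucI allI) (auto simp: S_def)
    next
      case False
      then obtain \<epsilon> where \<epsilon>: "\<epsilon> > 0" "\<forall>\<delta>. \<delta> \<in> S \<longrightarrow> \<epsilon> < \<delta>" by (auto simp: not_le)
      define D where "D = min \<epsilon> (1/10)"
      have D: "0 < D" "D \<le> 1/10" using \<epsilon> unfolding D_def by auto
      have bnd: "\<forall>\<delta>. 0 < \<delta> \<and> \<delta> \<le> D \<longrightarrow> measure M (arc (\<theta> - \<delta>) (\<theta> + \<delta>)) \<le> k * (10 * \<delta> * ln (1 / (10 * \<delta>)))"
      proof (intro allI impI)
        fix \<delta> assume d: "0 < \<delta> \<and> \<delta> \<le> D"
        then have "\<delta> \<notin> S" using \<epsilon> unfolding D_def by force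
        then show "measure M (arc (\<theta> - \<delta>) (\<theta> + \<delta>)) \<le> k * (10 * \<delta> * ln (1 / (10 * \<delta>)))"
          using d unfolding S_def by auto
      qed
      have ev: "\<forall>\<^sub>F r in at_left 1. u (of_real r * cis \<theta>) / \<bar>ln (1 - r)\<bar> \<le> 1 / real n"
        using eventual_bound[OF assms k_def upos sM fM rep D bnd] .
      have "Limsup (at_left (1::real)) (\<lambda>r. ereal (u (of_real r * cis \<theta>) / \<bar>ln (1 - r)\<bar>)) \<le> ereal (1 / real n)"
        by (rule Limsup_bounded) (rule eventually_mono[OF ev], simp)
      moreover have "ereal (2 / real n) \<le> Limsup (at_left (1::real)) (\<lambda>r. ereal (u (of_real r * cis \<theta>) / \<bar>ln (1 - r)\<bar>))"
        using \<theta>F unfolding Fset_def by simp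
      ultimately have "2 / real n \<le> 1 / real n" by (metis ereal_less_eq(3) order.trans)
      then show ?thesis using assms by (simp add: divide_simps)
    qed
  qed
qed

end
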